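(* Let $p=(a,b,c)\in P$ and let $H_p=\{(x,-\tfrac{x}{a},z): x,z\in\mathbb{R},\ z>\tfrac{x}{a}\}$. Every bounded invariant set of the flow of $F_p$ which is not a fixed point (nor limits to one) intersects $H_p$ transversely at least once. In particular, every periodic trajectory of $F_p$ intersects $H_p$ transversely at least once.
   Context: For $p=(a,b,c)\in\mathbb{R}^3$, $F_p$ is the Rössler vector field $\dot x=-y-z,\ \dot y=x+ay,\ \dot z=bx+z(x-c)$ on $\mathbb{R}^3$. $P\subseteq\mathbb{R}^3$ is an open set of parameters such that for every $p=(a,b,c)\in P$: (1) $a,b\in(0,1)$, $c>1$; (2) $F_p$ has exactly two fixed points, $P_{In}=(0,0,0)$ and $P_{Out}=(c-ab,b-\frac{c}{a},\frac{c}{a}-b)$, both saddle-foci; (3) $P_{In}$ has a one-dimensional stable and two-dimensional unstable manifold, $P_{Out}$ a one-dimensional unstable and two-dimensional stable manifold; (4) at least one of the two saddle indices $\nu_{In},\nu_{Out}$ (ratio of absolute real part of the complex eigenvalues to absolute value of the real eigenvalue) is $<1$. The plane $\{(x,-x/a,z)\}$ is the set $\{\dot y=0\}$; $F_p$ is tangent to it exactly along the line $\{(t,-t/a,t/a)\}$, and $H_p$ is the upper component of its complement in the plane. *)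

theory Defs
  imports "HOL-Analysis.Analysis"
begin

type_synonym point3 = "real \<times> real \<times> real"
type_synonym param3 = "real \<times> real \<times> real"

fun rossler :: "param3 \<Rightarrow> point3 \<Rightarrow> point3" where
  "rossler (a, b, c) (x, y, z) = (- y - z, x + a * y, b * x + z * (x - c))"

fun rossler_jac :: "param3 \<Rightarrow> point3 \<Rightarrow> complex^3^3" where
  "rossler_jac (a, b, c) (x, y, z) =
     vector [vector [0, -1, -1],
             vector [1, complex_of_real a, 0],
             vector [complex_of_real (b + z), 0, complex_of_real (x - c)]]"

definition eigenvalues3 :: "complex^3^3 \<Rightarrow> complex set" where
  "eigenvalues3 J = {l. det (mat l - J) = 0}"

definition saddle_focus_spectrum :: "complex^3^3 \<Rightarrow> real \<Rightarrow> real \<Rightarrow> real \<Rightarrow> bool" where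
  "saddle_focus_spectrum J \<gamma> \<rho> \<omega> \<longleftrightarrow>
     \<omega> \<noteq> 0 \<and> eigenvalues3 J = {complex_of_real \<gamma>, Complex \<rho> \<omega>, Complex \<rho> (- \<omega>)}"

definition P_In :: point3 where "P_In = (0, 0, 0)"

fun P_Out :: "param3 \<Rightarrow> point3" where
  "P_Out (a, b, c) = (c - a * b, b - c / a, c / a - b)"

fun rossler_param_ok :: "param3 \<Rightarrow> bool" where
  "rossler_param_ok (a, b, c) \<longleftrightarrow>
     0 < a \<and> a < 1 \<and> 0 < b \<and> b < 1 \<and> 1 < c \<and>
     P_In \<noteq> P_Out (a, b, c) \<and>
     {q. rossler (a, b, c) q = 0} = {P_In, P_Out (a, b, c)} \<and>
     (\<exists>\<gamma>i \<rho>i \<omega>i \<gamma>o \<rho>o \<omega>o.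
        saddle_focus_spectrum (rossler_jac (a, b, c) P_In) \<gamma>i \<rho>i \<omega>i \<and> \<gamma>i < 0 \<and> \<rho>i > 0 \<and>
        saddle_focus_spectrum (rossler_jac (a, b, c) (P_Out (a, b, c))) \<gamma>o \<rho>o \<omega>o \<and> \<gamma>o > 0 \<and> \<rho>o < 0 \<and>
        (\<bar>\<rho>i\<bar> / \<bar>\<gamma>i\<bar> < 1 \<or> \<bar>\<rho>o\<bar> / \<bar>\<gamma>o\<bar> < 1))"

text \<open>The upper half-plane H_p of the plane {ydot = 0}.\<close>
fun H_p :: "param3 \<Rightarrow> point3 set" where
  "H_p (a, b, c) = {(x, - x / a, z) | x z. z > x / a}"

text \<open>F_p(q) is transverse to the plane {x + a y = 0} (normal vector (1,a,0)).\<close>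
fun transverse_to_plane :: "param3 \<Rightarrow> point3 \<Rightarrow> bool" where
  "transverse_to_plane (a, b, c) q \<longleftrightarrow> fst (rossler (a, b, c) q) + a * fst (snd (rossler (a, b, c) q)) \<noteq> 0"

end

theory Submission imports Defs begin
lemma barbalat:
  fixes f f' f'' :: "real \<Rightarrow> real"
  assumes df: "\<And>t. (f has_real_derivative f' t) (at t)"
    and df': "\<And>t. (f' has_real_derivative f'' t) (at t)"
    and bd: "\<And>t. \<bar>f'' t\<bar> \<le> M"
    and lim: "(f \<longlongrightarrow> L) at_top"
  shows "(f' \<longlongrightarrow> 0) at_top"
proof (rule tendstoI)
  fix \<epsilon> :: real assume ep: "\<epsilon> > 0"
  have M0: "M \<ge> 0" using bd[of 0] by linarith
  define h where "h = \<epsilon> / (2 * (M + 1))"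
  have h0: "h > 0" using ep M0 by (simp add: h_def)
  have hM: "h * M < \<epsilon> / 2"
  proof -
    have "h * M < h * (M + 1)" using h0 by simp
    also have "\<dots> = \<epsilon> / 2" using M0 by (simp add: h_def field_simps)
    finally show ?thesis .
  qed
  define \<eta> where "\<eta> = \<epsilon> * h / 4"
  have eta0: "\<eta> > 0" using ep h0 by (simp add: \<eta>_def mult.commute)
  have "\<forall>\<^sub>F t in at_top. dist (f t) L < \<eta>" using lim eta0 by (rule tendstoD)
  then obtain N where N: "\<And>t. t \<ge> N \<Longrightarrow> dist (f t) L < \<eta>" by (auto simp: eventually_at_top_linorder)
  show "\<forall>\<^sub>F t in at_top. dist (f' t) 0 < \<epsilon>"
    unfolding eventually_at_top_linorder
  proof (intro exI allI impI)
    fix t assume t: "t \<ge> N"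
    obtain \<xi> where xi: "t < \<xi>" "\<xi> < t + h" "f (t + h) - f t = (t + h - t) * f' \<xi>"
      using MVT2[of t "t+h" f f'] h0 df by auto
    have "\<bar>f (t + h) - f t\<bar> < 2 * \<eta>" using N[of t] N[of "t+h"] t h0 by (simp add: dist_real_def)
    hence "h * \<bar>f' \<xi>\<bar> < 2 * \<eta>" using xi(3) h0 by (simp add: abs_mult)
    hence "h * \<bar>f' \<xi>\<bar> < h * (\<epsilon> / 2)" by (simp add: \<eta>_def mult.commute)
    hence a1: "\<bar>f' \<xi>\<bar> < \<epsilon> / 2" using h0 by simp
    obtain \<zeta> where ze: "t < \<zeta>" "\<zeta> < \<xi>" "f' \<xi> - f' t = (\<xi> - t) * f'' \<zeta>"
      using MVT2[of t \<xi> f' f''] xi df' by auto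
    have "\<bar>f' \<xi> - f' t\<bar> \<le> (\<xi> - t) * M" using ze bd[of \<zeta>] by (simp add: abs_mult mult_left_mono)
    also have "\<dots> \<le> h * M" using xi M0 by (simp add: mult_right_mono)
    finally have "\<bar>f' \<xi> - f' t\<bar> < \<epsilon> / 2" using hM by linarith
    with a1 show "dist (f' t) 0 < \<epsilon>" by (simp add: dist_real_def abs_if split: if_splits)
  qed
qed

lemma mono_conv:
  fixes f :: "real \<Rightarrow> real"
  assumes mono: "\<And>s t. T \<le> s \<Longrightarrow> s \<le> t \<Longrightarrow> f s \<le> f t" and bd: "\<And>t. f t \<le> B"
  shows "\<exists>L. (f \<longlongrightarrow> L) at_top"
proof -
  define L where "L = Sup (f ` {T..})"
  have bdd: "bdd_above (f ` {T..})" using bd by (auto intro!: bdd_aboveI[where M=B])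
  have up: "\<And>t. t \<ge> T \<Longrightarrow> f t \<le> L" unfolding L_def by (rule cSup_upper) (use bdd in auto)
  have "(f \<longlongrightarrow> L) at_top"
  proof (rule order_tendstoI)
    fix y assume "y < L"
    then obtain s where s: "s \<ge> T" "y < f s" unfolding L_def
      using less_cSup_iff[of "f ` {T..}" y] bdd by auto
    show "\<forall>\<^sub>F t in at_top. y < f t" unfolding eventually_at_top_linorder
      using s mono by (metis order.strict_trans2)
  next
    fix y assume "y > L"
    show "\<forall>\<^sub>F t in at_top. f t < y" unfolding eventually_at_top_linorder
      using up \<open>y > L\<close> by (metis order.strict_trans1)
  qed
  thus ?thesis by blast
qed
lemma vd_fst: "(f has_vector_derivative v) F \<Longrightarrow> ((\<lambda>t. fst (f t)) has_real_derivative fst v) F"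
  unfolding has_real_derivative_iff_has_vector_derivative has_vector_derivative_def
  by (auto intro!: derivative_eq_intros)
lemma vd_snd: "(f has_vector_derivative v) F \<Longrightarrow> ((\<lambda>t. snd (f t)) has_vector_derivative snd v) F"
  unfolding has_vector_derivative_def
  by (auto intro!: derivative_eq_intros)
lemma vd_snd_real: "(f has_vector_derivative v) F \<Longrightarrow> ((\<lambda>t. snd (f t)) has_real_derivative (snd v::real)) F"
  using vd_snd has_real_derivative_iff_has_vector_derivative by blast
lemma bnd_comp:
  fixes \<phi> :: "real \<Rightarrow> point3" and H :: "point3 \<Rightarrow> real"
  assumes "bounded (range \<phi>)" "continuous_on UNIV H"
  shows "\<exists>M. \<forall>t. \<bar>H (\<phi> t)\<bar> \<le> M"
proof -
  have "compact (closure (range \<phi>))" using assms(1) by (simp add: compact_closure)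
  hence "compact (H ` closure (range \<phi>))" by (meson assms(2) compact_continuous_image continuous_on_subset subset_UNIV)
  hence "bounded (H ` closure (range \<phi>))" by (rule compact_imp_bounded)
  then obtain M where "\<forall>x\<in>H ` closure (range \<phi>). norm x \<le> M" by (auto simp: bounded_iff)
  thus ?thesis by (metis closure_subset image_eqI range_eqI real_norm_def subsetD)
qed

theorem lemma2p1:
  fixes P :: "param3 set" and a b c :: real and \<phi> :: "real \<Rightarrow> point3"
  assumes "open P"
    and "\<forall>p\<in>P. rossler_param_ok p"
    and "(a, b, c) \<in> P"
    and "\<forall>t. (\<phi> has_vector_derivative rossler (a, b, c) (\<phi> t)) (at t)"
    and "bounded (range \<phi>)"
    and "\<not> (\<exists>q. rossler (a, b, c) q = 0 \<and> (\<phi> \<longlongrightarrow> q) at_top)"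
    and "\<not> (\<exists>q. rossler (a, b, c) q = 0 \<and> (\<phi> \<longlongrightarrow> q) at_bot)"
  shows "\<exists>t. \<phi> t \<in> H_p (a, b, c) \<and> transverse_to_plane (a, b, c) (\<phi> t)"
proof (rule ccontr)
  assume nt: "\<not> ?thesis"
  have a0: "a > 0" using assms(2,3) by auto
  define X where "X t = fst (\<phi> t)" for t
  define Y where "Y t = fst (snd (\<phi> t))" for t
  define Z where "Z t = snd (snd (\<phi> t))" for t
  have phi: "\<phi> t = (X t, Y t, Z t)" for t by (simp add: X_def Y_def Z_def)
  have F: "rossler (a, b, c) (\<phi> t) = (- Y t - Z t, X t + a * Y t, b * X t + Z t * (X t - c))" for t
    unfolding phi by simp
  have vd: "(\<phi> has_vector_derivative (- Y t - Z t, X t + a * Y t, b * X t + Z t * (X t - c))) (at t)" for t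
    using assms(4) F by metis
  have dX: "(X has_real_derivative (- Y t - Z t)) (at t)" for t
    using vd_fst[OF vd[of t]] unfolding X_def by simp
  have dY: "(Y has_real_derivative (X t + a * Y t)) (at t)" for t
    using vd_fst[OF vd_snd[OF vd[of t]]] unfolding Y_def by simp
  have dZ: "(Z has_real_derivative (b * X t + Z t * (X t - c))) (at t)" for t
    using vd_snd_real[OF vd_snd[OF vd[of t]]] unfolding Z_def by simp
  define g where "g t = X t + a * Y t" for t
  define g1 where "g1 t = - Y t - Z t + a * (X t + a * Y t)" for t
  define w where "w t = b * X t + Z t * (X t - c)" for t
  define g2 where "g2 t = - (X t + a * Y t) - w t + a * g1 t" for t
  define w1 where "w1 t = b * (- Y t - Z t) + w t * (X t - c) + Z t * (- Y t - Z t)" for t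
  have dY': "(Y has_real_derivative g t) (at t)" for t using dY by (simp add: g_def)
  have dZ': "(Z has_real_derivative w t) (at t)" for t using dZ by (simp add: w_def)
  have dg: "(g has_real_derivative g1 t) (at t)" for t
    unfolding g_def[abs_def] g1_def
    by (auto intro!: derivative_eq_intros dX dY simp: algebra_simps)
  have dg1: "(g1 has_real_derivative g2 t) (at t)" for t
    unfolding g1_def[abs_def] g2_def w_def g1_def
    by (auto intro!: derivative_eq_intros dX dY dZ simp: algebra_simps)
  have dw: "(w has_real_derivative w1 t) (at t)" for t
    unfolding w_def[abs_def] w1_def w_def
    by (auto intro!: derivative_eq_intros dX dY dZ simp: algebra_simps)
  have cg: "isCont g t" for t using dg DERIV_isCont by blast
  have NH: "g1 t \<ge> 0" if "g t = 0" for t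
  proof (rule ccontr)
    assume "\<not> g1 t \<ge> 0"
    hence lt: "g1 t < 0" by simp
    have Yt: "Y t = - X t / a" using that a0 unfolding g_def by (simp add: field_simps)
    have "\<phi> t \<in> H_p (a, b, c)"
      using lt that a0 unfolding phi g1_def g_def by (auto simp: Yt field_simps)
    moreover have "transverse_to_plane (a, b, c) (\<phi> t)"
      using lt F[of t] unfolding g1_def by simp
    ultimately show False using nt by blast
  qed
  have FP: False if fp: "rossler (a, b, c) (\<phi> u) = 0" for u
  proof -
    define xq where "xq = X u"
    define yq where "yq = Y u"
    define zq where "zq = Z u"
    have q1: "- yq - zq = 0" and q2: "xq + a * yq = 0" and q3: "b * xq + zq * (xq - c) = 0"
      using fp F[of u] by (auto simp: xq_def yq_def zq_def zero_prod_def)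
    obtain B where B: "\<And>t. \<bar>Z t\<bar> \<le> B"
    proof -
      have "continuous_on UNIV (\<lambda>p::point3. snd (snd p))" by (intro continuous_intros)
      from bnd_comp[OF assms(5) this] show ?thesis using that unfolding Z_def by blast
    qed
    define e where "e t = (X t - xq)^2 + (Y t - yq)^2 + (Z t - zq)^2" for t
    define e' where "e' t = 2 * (X t - xq) * (- Y t - Z t) + 2 * (Y t - yq) * (X t + a * Y t)
        + 2 * (Z t - zq) * (b * X t + Z t * (X t - c))" for t
    have de: "(e has_real_derivative e' t) (at t)" for t
      unfolding e_def[abs_def] e'_def
      by (auto intro!: derivative_eq_intros dX dY dZ simp: algebra_simps)
    define K where "K = \<bar>b - 1\<bar> + B"
    define C where "C = 2 * (K + a + \<bar>xq - c\<bar>)"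
    have K0: "K \<ge> 0" using B[of 0] by (simp add: K_def)
    have ebound: "e' t \<le> C * e t" for t
    proof -
      define u1 where "u1 = X t - xq"
      define u2 where "u2 = Y t - yq"
      define u3 where "u3 = Z t - zq"
      have eq: "e' t = 2 * ((b - 1 + Z t) * (u1 * u3) + a * u2^2 + (xq - c) * u3^2)"
      proof -
        have "e' t = 2 * (u1 * (- u2 - u3) + u2 * (u1 + a * u2) + u3 * (b * u1 + Z t * u1 + xq * u3 - c * u3))"
        proof -
          have "e' t - 2 * (u1 * (- u2 - u3) + u2 * (u1 + a * u2) + u3 * (b * u1 + Z t * u1 + xq * u3 - c * u3))
             = 2 * u1 * (- yq - zq) + 2 * u2 * (xq + a * yq) + 2 * u3 * (b * xq + zq * (xq - c))"
            unfolding e'_def u1_def u2_def u3_def by (simp add: algebra_simps)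
          thus ?thesis using q1 q2 q3 by simp
        qed
        thus ?thesis by (simp add: algebra_simps power2_eq_square)
      qed
      have p1: "\<bar>u1 * u3\<bar> \<le> (u1^2 + u3^2) / 2"
      proof -
        have "0 \<le> (\<bar>u1\<bar> - \<bar>u3\<bar>)^2" by simp
        thus ?thesis by (simp add: power2_eq_square algebra_simps abs_mult)
      qed
      have p2: "\<bar>b - 1 + Z t\<bar> \<le> K" using B[of t] unfolding K_def by linarith
      have t1: "(b - 1 + Z t) * (u1 * u3) \<le> K * ((u1^2 + u3^2) / 2)"
      proof -
        have "(b - 1 + Z t) * (u1 * u3) \<le> \<bar>b - 1 + Z t\<bar> * \<bar>u1 * u3\<bar>"
          by (metis abs_ge_self abs_mult)
        also have "\<dots> \<le> K * ((u1^2 + u3^2) / 2)" using p1 p2 K0 by (intro mult_mono) auto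
        finally show ?thesis .
      qed
      have t1': "K * ((u1^2 + u3^2) / 2) \<le> K * e t"
        using K0 unfolding e_def u1_def u3_def by (intro mult_left_mono) auto
      have t2: "a * u2^2 \<le> a * e t"
        using a0 unfolding e_def u2_def by (intro mult_left_mono) auto
      have t3: "(xq - c) * u3^2 \<le> \<bar>xq - c\<bar> * e t"
      proof -
        have "(xq - c) * u3^2 \<le> \<bar>xq - c\<bar> * u3^2" by (simp add: mult_right_mono)
        also have "\<dots> \<le> \<bar>xq - c\<bar> * e t" unfolding e_def u3_def by (intro mult_left_mono) auto
        finally show ?thesis .
      qed
      show ?thesis using eq t1 t1' t2 t3 unfolding C_def by (simp add: algebra_simps)
    qed
    define hh where "hh t = e t * exp (- C * t)" for t
    have dh: "(hh has_real_derivative (e' t * exp (- C * t) - C * e t * exp (- C * t))) (at t)" for t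
      unfolding hh_def[abs_def]
      by (auto intro!: derivative_eq_intros de simp: algebra_simps)
    have eu: "e u = 0" by (simp add: e_def xq_def yq_def zq_def)
    have "\<phi> t = \<phi> u" if tu: "t \<ge> u" for t
    proof -
      have "hh t \<le> hh u"
        using tu dh ebound
        by (intro DERIV_nonpos_imp_nonincreasing[of u t hh])
           (auto intro!: exI simp: algebra_simps mult_right_mono)
      hence "e t \<le> 0" using eu by (simp add: hh_def mult_le_0_iff)
      moreover have "e t \<ge> 0" by (simp add: e_def)
      ultimately have "e t = 0" by simp
      moreover have "(X t - xq)^2 \<ge> 0" "(Y t - yq)^2 \<ge> 0" "(Z t - zq)^2 \<ge> 0" by simp_all
      ultimately have "(X t - xq)^2 = 0" "(Y t - yq)^2 = 0" "(Z t - zq)^2 = 0" unfolding e_def by linarith+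
      hence "X t = xq" "Y t = yq" "Z t = zq" by simp_all
      thus ?thesis using phi[of t] phi[of u] by (simp add: xq_def yq_def zq_def)
    qed
    hence "eventually (\<lambda>t. \<phi> t = \<phi> u) at_top"
      unfolding eventually_at_top_linorder by blast
    hence "(\<phi> \<longlongrightarrow> \<phi> u) at_top" by (rule tendsto_eventually)
    thus False using assms(6) fp by blast
  qed
  have fixpt: "rossler (a, b, c) (\<phi> u) = 0" if "g u = 0" "g1 u = 0" "g2 u = 0" for u
    using that F[of u] unfolding g_def g1_def g2_def w_def by (auto simp: zero_prod_def)
  have key: False if t12: "t1 < t2" "g t1 > 0" "g t2 < 0" for t1 t2
  proof -
    define S where "S = {t. t1 \<le> t \<and> t \<le> t2 \<and> g t > 0}"
    define u where "u = Sup S"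
    have t1S: "t1 \<in> S" using t12 by (simp add: S_def)
    have bddS: "bdd_above S" unfolding S_def by (auto intro!: bdd_aboveI[where M=t2])
    have upS: "s \<le> u" if "s \<in> S" for s using that bddS unfolding u_def by (rule cSup_upper)
    have u1: "t1 \<le> u" using upS t1S by simp
    have u2: "u \<le> t2" unfolding u_def using t1S by (intro cSup_least) (auto simp: S_def)
    have left: "\<exists>s\<in>S. u - d < s" if "d > 0" for d
      using less_cSup_iff[OF _ bddS, of "u - d"] t1S that unfolding u_def by auto
    have gu0: "g u \<ge> 0"
    proof (rule ccontr)
      assume "\<not> g u \<ge> 0"
      hence "g u < 0" by simp
      have "\<forall>\<^sub>F t in at u. g t < 0"
        using cg[of u, unfolded isCont_def] \<open>g u < 0\<close> by (rule order_tendstoD)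
      then obtain d0 where d0: "d0 > 0" "\<And>t. t \<noteq> u \<Longrightarrow> dist t u < d0 \<Longrightarrow> g t < 0"
        unfolding eventually_at by auto
      obtain d where d: "d > 0" "\<And>t. \<bar>t - u\<bar> < d \<Longrightarrow> g t < 0"
        using d0 \<open>g u < 0\<close> by (metis dist_real_def)
      obtain s where "s \<in> S" "u - d < s" using left d(1) by blast
      moreover have "s \<le> u" using upS calculation(1) .
      ultimately have "g s < 0" using d(2)[of s] by simp
      thus False using \<open>s \<in> S\<close> by (simp add: S_def)
    qed
    have gu: "g u = 0"
    proof (rule ccontr)
      assume "g u \<noteq> 0"
      hence pos: "g u > 0" using gu0 by simp
      hence ut2: "u < t2" using u2 t12 by (cases "u = t2") auto
      have "\<forall>\<^sub>F t in at u. g t > 0"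
        using cg[of u, unfolded isCont_def] pos by (rule order_tendstoD)
      then obtain d0 where d0: "d0 > 0" "\<And>t. t \<noteq> u \<Longrightarrow> dist t u < d0 \<Longrightarrow> g t > 0"
        unfolding eventually_at by auto
      obtain d where d: "d > 0" "\<And>t. \<bar>t - u\<bar> < d \<Longrightarrow> g t > 0"
        using d0 pos by (metis dist_real_def)
      define t where "t = min (u + d / 2) t2"
      have "t \<in> S" using d ut2 u1 by (auto simp: S_def t_def intro!: d(2))
      moreover have "t > u" using d ut2 by (simp add: t_def)
      ultimately show False using upS by fastforce
    qed
    have ut2: "u < t2" using u2 t12 gu by (cases "u = t2") auto
    have right: "g t \<le> 0" if "u < t" "t \<le> t2" for t
    proof (rule ccontr)
      assume "\<not> g t \<le> 0"
      hence "t \<in> S" using that u1 by (simp add: S_def)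
      thus False using upS that by fastforce
    qed
    have left': "\<exists>s. u - d < s \<and> s < u \<and> g s > 0" if dpos: "d > 0" for d
    proof -
      obtain s where "s \<in> S" "u - d < s" using left[OF dpos] by blast
      moreover have "s \<le> u" using upS calculation(1) .
      moreover have "s \<noteq> u" using gu calculation(1) by (auto simp: S_def)
      ultimately show ?thesis by (auto simp: S_def)
    qed
    have g1u: "g1 u = 0"
    proof (rule ccontr)
      assume "g1 u \<noteq> 0"
      hence "g1 u > 0" using NH[OF gu] by simp
      then obtain d where d: "d > 0" "\<And>h. h > 0 \<Longrightarrow> h < d \<Longrightarrow> g (u - h) < g u"
        using DERIV_pos_inc_left[OF dg[of u]] by blast
      obtain s where s: "u - d < s" "s < u" "g s > 0" using left' d(1) by blast
      have "g (u - (u - s)) < g u" using s by (intro d(2)) auto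
      thus False using s gu by simp
    qed
    consider "g2 u > 0" | "g2 u < 0" | "g2 u = 0" by linarith
    thus False
    proof cases
      case 1
      then obtain d where d: "d > 0" "\<And>h. h > 0 \<Longrightarrow> h < d \<Longrightarrow> g1 u < g1 (u + h)"
        using DERIV_pos_inc_right[OF dg1[of u]] by blast
      define t where "t = min (u + d / 2) t2"
      have ut: "u < t" "t < u + d" "t \<le> t2" using d ut2 by (auto simp: t_def)
      obtain \<xi> where xi: "u < \<xi>" "\<xi> < t" "g t - g u = (t - u) * g1 \<xi>"
        using MVT2[of u t g g1] ut dg by auto
      have "g1 u < g1 (u + (\<xi> - u))" using xi ut by (intro d(2)) auto
      hence "g1 \<xi> > 0" using g1u by simp
      hence "g t > 0" using xi gu by simp
      thus False using right ut by fastforce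
    next
      case 2
      then obtain d where d: "d > 0" "\<And>h. h > 0 \<Longrightarrow> h < d \<Longrightarrow> g1 u < g1 (u - h)"
        using DERIV_neg_dec_left[OF dg1[of u]] by blast
      obtain s where s: "u - d < s" "s < u" "g s > 0" using left' d(1) by blast
      obtain \<xi> where xi: "s < \<xi>" "\<xi> < u" "g u - g s = (u - s) * g1 \<xi>"
        using MVT2[of s u g g1] s dg by auto
      have "g1 u < g1 (u - (u - \<xi>))" using xi s by (intro d(2)) auto
      hence "g1 \<xi> > 0" using g1u by simp
      hence "(u - s) * g1 \<xi> > 0" using xi by simp
      hence "g u > g s" using xi by linarith
      thus False using s gu by simp
    next
      case 3
      show False using FP[OF fixpt[OF gu g1u 3]] .
    qed
  qed
  obtain BB where BB: "\<And>t. \<bar>Y t\<bar> \<le> BB"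
  proof -
    have "continuous_on UNIV (\<lambda>p::point3. fst (snd p))" by (intro continuous_intros)
    from bnd_comp[OF assms(5) this] show ?thesis using that unfolding Y_def by blast
  qed
  have "\<exists>L. (Y \<longlongrightarrow> L) at_top"
  proof (cases "\<exists>t1. g t1 > 0")
    case True
    then obtain t1 where t1: "g t1 > 0" by blast
    have nn: "g t \<ge> 0" if "t \<ge> t1" for t
      using key[of t1 t] t1 that by (cases "t = t1") (auto simp: not_le[symmetric])
    show ?thesis
    proof (rule mono_conv[where T=t1 and B=BB])
      fix s t assume "t1 \<le> s" "s \<le> t"
      thus "Y s \<le> Y t" using nn dY'
        by (intro DERIV_nonneg_imp_nondecreasing[of s t Y]) (auto intro!: exI[where x="g _"])
    next
      fix t show "Y t \<le> BB" using BB[of t] by simp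
    qed
  next
    case False
    hence np: "g t \<le> 0" for t by (simp add: not_less)
    have "\<exists>L. ((\<lambda>t. - Y t) \<longlongrightarrow> L) at_top"
    proof (rule mono_conv[where T=0 and B=BB])
      fix s t :: real assume "0 \<le> s" "s \<le> t"
      thus "- Y s \<le> - Y t" using np dY'
        by (intro DERIV_nonneg_imp_nondecreasing[of s t "\<lambda>t. - Y t"])
           (auto intro!: exI[where x="- g _"] derivative_eq_intros)
    next
      fix t show "- Y t \<le> BB" using BB[of t] by simp
    qed
    then obtain L where "((\<lambda>t. - Y t) \<longlongrightarrow> L) at_top" by blast
    hence "((\<lambda>t. - (- Y t)) \<longlongrightarrow> - L) at_top" by (intro tendsto_intros)
    thus ?thesis by auto
  qed
  then obtain L where YL: "(Y \<longlongrightarrow> L) at_top" by blast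
  have bnd: "\<exists>M. \<forall>t. \<bar>H (\<phi> t)\<bar> \<le> M" if "continuous_on UNIV H" for H :: "point3 \<Rightarrow> real"
    using bnd_comp[OF assms(5) that] .
  obtain M1 where M1: "\<And>t. \<bar>g1 t\<bar> \<le> M1"
  proof -
    have "continuous_on UNIV (\<lambda>p::point3. - fst (snd p) - snd (snd p) + a * (fst p + a * fst (snd p)))"
      by (intro continuous_intros)
    from bnd[OF this] show ?thesis using that unfolding g1_def X_def Y_def Z_def by blast
  qed
  obtain M2 where M2: "\<And>t. \<bar>g2 t\<bar> \<le> M2"
  proof -
    have "continuous_on UNIV (\<lambda>p::point3. - (fst p + a * fst (snd p)) - (b * fst p + snd (snd p) * (fst p - c))
       + a * (- fst (snd p) - snd (snd p) + a * (fst p + a * fst (snd p))))"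
      by (intro continuous_intros)
    from bnd[OF this] show ?thesis using that unfolding g2_def g1_def w_def X_def Y_def Z_def by blast
  qed
  obtain M3 where M3: "\<And>t. \<bar>w1 t\<bar> \<le> M3"
  proof -
    have "continuous_on UNIV (\<lambda>p::point3. b * (- fst (snd p) - snd (snd p)) + (b * fst p + snd (snd p) * (fst p - c)) * (fst p - c)
       + snd (snd p) * (- fst (snd p) - snd (snd p)))"
      by (intro continuous_intros)
    from bnd[OF this] show ?thesis using that unfolding w1_def w_def X_def Y_def Z_def by blast
  qed
  have g0: "(g \<longlongrightarrow> 0) at_top" by (rule barbalat[OF dY' dg M1 YL])
  have g10: "(g1 \<longlongrightarrow> 0) at_top" by (rule barbalat[OF dg dg1 M2 g0])
  have ZL: "(Z \<longlongrightarrow> - L) at_top"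
  proof -
    have "Z = (\<lambda>t. - Y t - g1 t + a * g t)" by (auto simp: g1_def g_def)
    moreover have "((\<lambda>t. - Y t - g1 t + a * g t) \<longlongrightarrow> - L - 0 + a * 0) at_top"
      by (intro tendsto_intros YL g10 g0)
    ultimately show ?thesis by simp
  qed
  have XL: "(X \<longlongrightarrow> - a * L) at_top"
  proof -
    have "X = (\<lambda>t. g t - a * Y t)" by (auto simp: g_def)
    moreover have "((\<lambda>t. g t - a * Y t) \<longlongrightarrow> 0 - a * L) at_top"
      by (intro tendsto_intros YL g0)
    ultimately show ?thesis by simp
  qed
  have w0: "(w \<longlongrightarrow> 0) at_top" by (rule barbalat[OF dZ' dw M3 ZL])
  have "(w \<longlongrightarrow> b * (- a * L) + (- L) * (- a * L - c)) at_top"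
    unfolding w_def[abs_def] by (intro tendsto_intros XL ZL)
  hence weq: "b * (- a * L) + (- L) * (- a * L - c) = 0" using w0 by (intro tendsto_unique[OF trivial_limit_at_top_linorder]) auto
  define q where "q = (- a * L, L, - L)"
  have rq: "rossler (a, b, c) q = 0" using weq by (simp add: q_def zero_prod_def)
  have "((\<lambda>t. (X t, Y t, Z t)) \<longlongrightarrow> q) at_top" unfolding q_def
    by (intro tendsto_Pair XL YL ZL)
  moreover have "(\<lambda>t. (X t, Y t, Z t)) = \<phi>" using phi by (intro ext) simp
  ultimately have "(\<phi> \<longlongrightarrow> q) at_top" by simp
  thus False using assms(6) rq by blast
qed
end
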